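(* Fix constants $c,C,s_0,s_1,T>0$. Then there exists $N$ (depending only on these constants) such that the following holds for every $n\ge N$. Let $A$ be an $n\times n$ real symmetric positive definite matrix with diagonal entries $a_1<a_2<\dots<a_n$, satisfying $|a_k-a_l|\ge cn$ for $k\ne l$ and $r_k=\sum_{l\ne k}|A(k,l)|\le C$ for all $k$. Let $S$ be an $n\times n$ real symmetric matrix with $s_0\le S(k,k)\le s_1$ for all $k$ and $|S(k,l)|\le s_1/n$ for all $k\ne l$, and let $0<t\le T$. Let $\lambda_1\le\dots\le\lambda_n$ be the eigenvalues of $A$ and $\tilde\lambda_1\le\dots\le\tilde\lambda_n$ the eigenvalues of $A+tS$. Then $$\lambda_1\le\tilde\lambda_1\le\lambda_2\le\tilde\lambda_2\le\cdots\le\lambda_n\le\tilde\lambda_n.$$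
   Context: This formalizes the setting "diagonal separation $\mathcal{O}(n)$, off-diagonal row sums $\mathcal{O}(1)$ for $A$; perturbation $S$ with off-diagonal entries $\mathcal{O}(1/n)$, positive diagonal entries $\mathcal{O}(1)$; $t>0$, $t=\mathcal{O}(1)$". *)

theory Defs
  imports "Jordan_Normal_Form.Char_Poly" "HOL-Library.Multiset"
begin

definition sym_mat :: "nat \<Rightarrow> real mat \<Rightarrow> bool" where
  "sym_mat n A \<longleftrightarrow> A \<in> carrier_mat n n \<and> transpose_mat A = A"

definition pos_def_mat :: "nat \<Rightarrow> real mat \<Rightarrow> bool" where
  "pos_def_mat n A \<longleftrightarrow> A \<in> carrier_mat n n \<and>
     (\<forall>x \<in> carrier_vec n. x \<noteq> 0\<^sub>v n \<longrightarrow> x \<bullet> (A *\<^sub>v x) > 0)"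

(* Eigenvalues (roots of the characteristic polynomial, with algebraic multiplicity)
   listed in non-decreasing order. For a real symmetric n x n matrix this list has length n. *)
definition eigenvalues_sorted :: "real mat \<Rightarrow> real list" where
  "eigenvalues_sorted A = sorted_list_of_multiset (proots (char_poly A))"

end

theory Submission
  imports Defs
begin

lemma obtain_max:
  fixes f :: "nat \<Rightarrow> real"
  assumes "n > 0"
  shows "\<exists>i\<in>{0..<n}. \<forall>j\<in>{0..<n}. f j \<le> f i"
proof -
  have "Max (f ` {0..<n}) \<in> f ` {0..<n}" by (rule Max_in) (use assms in auto)
  then obtain i where i: "i \<in> {0..<n}" "f i = Max (f ` {0..<n})" by auto
  thus ?thesis by (auto intro!: bexI[of _ i] Max_ge)
qed

lemma mv_index:
  assumes "X \<in> carrier_mat n n" "v \<in> carrier_vec n"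
  shows "i < n \<Longrightarrow> (X *\<^sub>v v) $ i = (\<Sum>j\<in>{0..<n}. X $$ (i,j) * v $ j)"
  using assms by (auto simp: scalar_prod_def intro!: sum.cong)

lemma dd_nonsing:
  fixes X :: "real mat"
  assumes X: "X \<in> carrier_mat n n"
  and dom: "\<forall>i<n. (\<Sum>j\<in>{0..<n}-{i}. \<bar>X $$ (i,j)\<bar>) < \<bar>X $$ (i,i)\<bar>"
  shows "det X \<noteq> 0"
proof
  assume "det X = 0"
  then obtain v where v: "v \<in> carrier_vec n" "v \<noteq> 0\<^sub>v n" "X *\<^sub>v v = 0\<^sub>v n"
    using det_0_iff_vec_prod_zero[OF X] by auto
  have n0: "n > 0" using v by (cases n) auto
  obtain i where i: "i \<in> {0..<n}" and imax: "\<forall>j\<in>{0..<n}. \<bar>v $ j\<bar> \<le> \<bar>v $ i\<bar>"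
    using obtain_max[of n "\<lambda>j. \<bar>v $ j\<bar>"] n0 by blast
  have vi: "\<bar>v $ i\<bar> > 0"
  proof (rule ccontr)
    assume "\<not> ?thesis"
    hence "\<forall>j<n. v $ j = 0" using imax by fastforce
    hence "v = 0\<^sub>v n" using v(1) by (intro eq_vecI) auto
    thus False using v by auto
  qed
  have "(X *\<^sub>v v) $ i = 0" using v i by auto
  hence "(\<Sum>j\<in>{0..<n}. X $$ (i,j) * v $ j) = 0"
    using mv_index[OF X v(1)] i by auto
  moreover have "(\<Sum>j\<in>{0..<n}. X $$ (i,j) * v $ j) = X $$ (i,i) * v $ i + (\<Sum>j\<in>{0..<n}-{i}. X $$ (i,j) * v $ j)"
    using i by (simp add: sum.remove)
  ultimately have "\<bar>X $$ (i,i) * v $ i\<bar> = \<bar>\<Sum>j\<in>{0..<n}-{i}. X $$ (i,j) * v $ j\<bar>" by linarith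
  also have "\<dots> \<le> (\<Sum>j\<in>{0..<n}-{i}. \<bar>X $$ (i,j)\<bar> * \<bar>v $ i\<bar>)"
    by (rule order_trans[OF sum_abs], rule sum_mono) (use imax in \<open>auto simp: abs_mult intro: mult_left_mono\<close>)
  also have "\<dots> = (\<Sum>j\<in>{0..<n}-{i}. \<bar>X $$ (i,j)\<bar>) * \<bar>v $ i\<bar>" by (simp add: sum_distrib_right)
  also have "\<dots> < \<bar>X $$ (i,i)\<bar> * \<bar>v $ i\<bar>" using dom i vi by auto
  finally show False by (simp add: abs_mult)
qed


lemma dd_det_sign:
  fixes X :: "real mat"
  assumes X: "X \<in> carrier_mat n n"
  and dom: "\<forall>i<n. (\<Sum>j\<in>{0..<n}-{i}. \<bar>X $$ (i,j)\<bar>) < \<bar>X $$ (i,i)\<bar>"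
  shows "det X * (\<Prod>i\<in>{0..<n}. X $$ (i,i)) > 0"
proof -
  define P where "P = (\<Prod>i\<in>{0..<n}. X $$ (i,i))"
  define Y where "Y s = mat n n (\<lambda>(i,j). if i = j then X $$ (i,i) else s * X $$ (i,j))" for s :: real
  define g where "g s = (\<Sum>p\<in>{p. p permutes {0..<n}}. signof p *
      (\<Prod>i=0..<n. (if i = p i then X $$ (i,i) else s * X $$ (i, p i)))) * P" for s :: real
  have Yc: "Y s \<in> carrier_mat n n" for s unfolding Y_def by auto
  have detY: "det (Y s) * P = g s" for s
  proof -
    have "det (Y s) = (\<Sum>p\<in>{p. p permutes {0..<n}}. signof p * (\<Prod>i=0..<n. Y s $$ (i, p i)))"
      by (rule det_def'[OF Yc])
    also have "\<dots> = (\<Sum>p\<in>{p. p permutes {0..<n}}. signof p *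
      (\<Prod>i=0..<n. (if i = p i then X $$ (i,i) else s * X $$ (i, p i))))"
    proof (rule sum.cong[OF refl])
      fix p assume p: "p \<in> {p. p permutes {0..<n}}"
      have "\<And>i. i < n \<Longrightarrow> p i < n" using p by (auto simp: permutes_in_image)
      thus "signof p * (\<Prod>i=0..<n. Y s $$ (i, p i)) = signof p *
      (\<Prod>i=0..<n. (if i = p i then X $$ (i,i) else s * X $$ (i, p i)))"
        unfolding Y_def by (intro arg_cong[where f="\<lambda>x. signof p * x"] prod.cong) auto
    qed
    finally show ?thesis unfolding g_def by simp
  qed
  have cont: "isCont g s" for s unfolding g_def
    apply (intro continuous_intros)
    subgoal for p i by (cases "i = p i") (auto intro: continuous_intros)
    done
  have Y1: "Y 1 = X" unfolding Y_def using X by (intro eq_matI) auto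
  have Pnz: "P \<noteq> 0"
  proof -
    have "X $$ (i,i) \<noteq> 0" if "i < n" for i
    proof -
      have "0 \<le> (\<Sum>j\<in>{0..<n}-{i}. \<bar>X $$ (i,j)\<bar>)" by (rule sum_nonneg) auto
      moreover have "(\<Sum>j\<in>{0..<n}-{i}. \<bar>X $$ (i,j)\<bar>) < \<bar>X $$ (i,i)\<bar>" using dom that by blast
      ultimately have "0 < \<bar>X $$ (i,i)\<bar>" by linarith
      thus ?thesis by auto
    qed
    thus ?thesis unfolding P_def by auto
  qed
  have g0: "g 0 > 0"
  proof -
    have ut: "upper_triangular (Y 0)" unfolding Y_def upper_triangular_def by auto
    have "det (Y 0) = (\<Prod>i=0..<n. Y 0 $$ (i,i))"
      using det_upper_triangular[OF ut Yc] by (simp add: prod_list_diag_prod Y_def)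
    also have "\<dots> = P" unfolding P_def Y_def by (intro prod.cong) auto
    finally have "g 0 = P * P" using detY[of 0] by simp
    thus ?thesis using Pnz by (simp add: not_square_less_zero order_less_le)
  qed
  have gnz: "g s \<noteq> 0" if s: "0 \<le> s" "s \<le> 1" for s
  proof -
    have "det (Y s) \<noteq> 0"
    proof (rule dd_nonsing[OF Yc], intro allI impI)
      fix i assume i: "i < n"
      have "(\<Sum>j\<in>{0..<n}-{i}. \<bar>Y s $$ (i,j)\<bar>) = s * (\<Sum>j\<in>{0..<n}-{i}. \<bar>X $$ (i,j)\<bar>)"
        unfolding sum_distrib_left using i s by (intro sum.cong) (auto simp: Y_def abs_mult)
      also have "\<dots> \<le> (\<Sum>j\<in>{0..<n}-{i}. \<bar>X $$ (i,j)\<bar>)"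
        using s by (intro mult_left_le_one_le) (auto intro: sum_nonneg)
      also have "\<dots> < \<bar>X $$ (i,i)\<bar>" using dom i by auto
      finally show "(\<Sum>j\<in>{0..<n}-{i}. \<bar>Y s $$ (i,j)\<bar>) < \<bar>Y s $$ (i,i)\<bar>" using i by (simp add: Y_def)
    qed
    thus ?thesis using detY[of s] Pnz by auto
  qed
  have "g 1 > 0"
  proof (rule ccontr)
    assume "\<not> g 1 > 0"
    then obtain s where "0 \<le> s" "s \<le> 1" "g s = 0"
      using IVT2[of g 1 0 0] g0 cont by force
    thus False using gnz by auto
  qed
  thus ?thesis using detY[of 1] Y1 unfolding P_def by simp
qed


lemma mset_distinct_sub:
  fixes xs :: "'a list"
  assumes "distinct xs" "set xs \<subseteq> set_mset M"
  shows "mset xs \<subseteq># M"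
proof -
  have "mset_set (set xs) \<subseteq># M"
    using assms(2) by (meson mset_set_set_mset_msubset subset_imp_msubset_mset_set subset_mset.order_trans finite_set_mset)
  thus ?thesis using mset_set_set[OF assms(1)] by simp
qed

lemma charpoly_eval:
  fixes M :: "real mat"
  assumes M: "M \<in> carrier_mat n n"
  shows "poly (char_poly M) x = det (mat n n (\<lambda>(i,j). (if i = j then x else 0) - M $$ (i,j)))"
  unfolding char_poly_def
  by (rule poly_det_cong[of _ n]) (use M in \<open>auto simp: char_poly_matrix_def\<close>)


lemma ev_loc:
  fixes M :: "real mat" and g :: "nat \<Rightarrow> real" and R D :: real
  assumes M: "M \<in> carrier_mat n n"
  and Rb: "\<forall>l<n. (\<Sum>j\<in>{0..<n}-{l}. \<bar>M $$ (l,j)\<bar>) \<le> R" and DR: "R < D"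
  and gl: "\<forall>k\<le>n. \<forall>l<n. (l < k \<longrightarrow> M $$ (l,l) + D \<le> g k) \<and> (k \<le> l \<longrightarrow> g k + D \<le> M $$ (l,l))"
  shows "length (eigenvalues_sorted M) = n \<and> (\<forall>k<n. g k < eigenvalues_sorted M ! k
     \<and> eigenvalues_sorted M ! k < g (Suc k) \<and> poly (char_poly M) (eigenvalues_sorted M ! k) = 0)"
proof -
  define p where "p = char_poly M"
  define Pr where "Pr k = (\<Prod>l\<in>{0..<n}. g k - M $$ (l,l))" for k
  have Rpos: "0 \<le> R" if "n > 0"
  proof -
    have "0 \<le> (\<Sum>j\<in>{0..<n}-{0}. \<bar>M $$ (0,j)\<bar>)" by (rule sum_nonneg) auto
    moreover have "(\<Sum>j\<in>{0..<n}-{0}. \<bar>M $$ (0,j)\<bar>) \<le> R" using Rb that by blast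
    ultimately show ?thesis by linarith
  qed
  have sgn: "poly p (g k) * Pr k > 0" if k: "k \<le> n" for k
  proof -
    let ?X = "mat n n (\<lambda>(i,j). (if i = j then g k else 0) - M $$ (i,j))"
    have "det ?X * (\<Prod>i\<in>{0..<n}. ?X $$ (i,i)) > 0"
    proof (rule dd_det_sign, simp, intro allI impI)
      fix i assume i: "i < n"
      have "(\<Sum>j\<in>{0..<n}-{i}. \<bar>?X $$ (i,j)\<bar>) = (\<Sum>j\<in>{0..<n}-{i}. \<bar>M $$ (i,j)\<bar>)"
        using i by (intro sum.cong) auto
      also have "\<dots> \<le> R" using Rb i by auto
      also have "\<dots> < D" by fact
      also have "D \<le> \<bar>?X $$ (i,i)\<bar>"
      proof (cases "i < k")
        case True
        hence "M $$ (i,i) + D \<le> g k" using gl k i by blast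
        thus ?thesis using i by simp
      next
        case False
        hence "g k + D \<le> M $$ (i,i)" using gl k i by auto
        thus ?thesis using i by simp
      qed
      finally show "(\<Sum>j\<in>{0..<n}-{i}. \<bar>?X $$ (i,j)\<bar>) < \<bar>?X $$ (i,i)\<bar>" .
    qed
    moreover have "(\<Prod>i\<in>{0..<n}. ?X $$ (i,i)) = Pr k" unfolding Pr_def by (intro prod.cong) auto
    ultimately show ?thesis unfolding p_def charpoly_eval[OF M] by simp
  qed
  have gstep: "g k < g (Suc k)" if "k < n" for k
  proof -
    have "g k + D \<le> M $$ (k,k)" "M $$ (k,k) + D \<le> g (Suc k)" using gl that by auto
    moreover have "0 < D" using Rpos DR that by auto
    ultimately show ?thesis by linarith
  qed
  have gmono: "g i \<le> g j" if "i \<le> j" "j \<le> n" for i j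
    using that
  proof (induction j rule: dec_induct)
    case base then show ?case by simp
  next
    case (step j) then show ?case using gstep[of j] by simp
  qed
  have prneg: "Pr k * Pr (Suc k) < 0" if k: "k < n" for k
  proof -
    define f where "f l = (g k - M $$ (l,l)) * (g (Suc k) - M $$ (l,l))" for l
    have "Pr k * Pr (Suc k) = (\<Prod>l\<in>{0..<n}. f l)" unfolding Pr_def f_def prod.distrib by simp
    also have "\<dots> = f k * (\<Prod>l\<in>{0..<n}-{k}. f l)" using k by (simp add: prod.remove)
    also have "\<dots> < 0"
    proof (rule mult_neg_pos)
      have "g k + D \<le> M $$ (k,k)" "M $$ (k,k) + D \<le> g (Suc k)" using gl k by auto
      moreover have "0 < D" using Rpos DR k by auto
      ultimately show "f k < 0" unfolding f_def by (intro mult_neg_pos) linarith+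
      show "0 < (\<Prod>l\<in>{0..<n}-{k}. f l)"
      proof (rule prod_pos)
        fix l assume l: "l \<in> {0..<n}-{k}"
        show "0 < f l"
        proof (cases "l < k")
          case True
          hence "M $$ (l,l) + D \<le> g k" "M $$ (l,l) + D \<le> g (Suc k)" using gl k l by auto
          thus ?thesis unfolding f_def using \<open>0 < D\<close> by (intro mult_pos_pos) linarith+
        next
          case False
          hence "Suc k \<le> l" using l by auto
          hence "g k + D \<le> M $$ (l,l)" "g (Suc k) + D \<le> M $$ (l,l)" using gl k l by auto
          thus ?thesis unfolding f_def using \<open>0 < D\<close> by (intro mult_neg_neg) linarith+
        qed
      qed
    qed
    finally show ?thesis .
  qed
  have root: "\<exists>r. g k < r \<and> r < g (Suc k) \<and> poly p r = 0" if k: "k < n" for k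
  proof -
    have a: "poly p (g k) * Pr k > 0" and b: "poly p (g (Suc k)) * Pr (Suc k) > 0" using sgn k by auto
    have "(poly p (g k) * poly p (g (Suc k))) * (Pr k * Pr (Suc k)) > 0"
      using mult_pos_pos[OF a b] by (simp add: algebra_simps)
    moreover have "\<And>x y::real. 0 < x*y \<Longrightarrow> y < 0 \<Longrightarrow> x < 0"
      by (auto simp: zero_less_mult_iff)
    ultimately have "poly p (g k) * poly p (g (Suc k)) < 0" using prneg[OF k] by blast
    thus ?thesis using poly_IVT[OF gstep[OF k]] by auto
  qed
  then obtain r where r: "\<And>k. k < n \<Longrightarrow> g k < r k \<and> r k < g (Suc k) \<and> poly p (r k) = 0"
    by metis
  have rmono: "r i < r j" if "i < j" "j < n" for i j
  proof -
    have "r i < g (Suc i)" using r that by auto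
    also have "g (Suc i) \<le> g j" using gmono that by auto
    also have "g j < r j" using r that by auto
    finally show ?thesis .
  qed
  define xs where "xs = map r [0..<n]"
  have sorted: "sorted xs" unfolding xs_def sorted_iff_nth_mono
    by (auto intro: less_imp_le rmono simp: le_less)
  have dist: "distinct xs" unfolding xs_def distinct_map
    using rmono by (auto simp: inj_on_def) (metis linorder_neqE_nat less_irrefl)
  have pdeg: "degree p = n" "coeff p n = 1" using degree_monic_char_poly[OF M] unfolding p_def by auto
  hence p0: "p \<noteq> 0" by auto
  have "set xs \<subseteq> set_mset (proots p)" using r p0 unfolding xs_def by auto
  hence sub: "mset xs \<subseteq># proots p" by (rule mset_distinct_sub[OF dist])
  have "mset xs = proots p"
  proof (rule ccontr)
    assume "mset xs \<noteq> proots p"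
    hence "mset xs \<subset># proots p" using sub by (simp add: subset_mset.le_neq_trans)
    hence "size (mset xs) < size (proots p)" by (rule mset_subset_size)
    moreover have "size (proots p) \<le> n" using size_proots_le[of p] pdeg by simp
    ultimately show False unfolding xs_def by simp
  qed
  hence ev: "eigenvalues_sorted M = xs" unfolding eigenvalues_sorted_def p_def[symmetric]
    using sorted by (metis sorted_list_of_multiset_mset sorted_sort_id)
  show ?thesis unfolding ev using r unfolding xs_def p_def by auto
qed


lemma loc:
  fixes M :: "real mat" and w :: "nat \<Rightarrow> real"
  assumes Rb: "\<forall>l<n. (\<Sum>j\<in>{0..<n}-{l}. \<bar>M $$ (l,j)\<bar>) \<le> R" and R0: "0 \<le> R" and DR: "R < D"
  and eig: "\<forall>i<n. (\<Sum>j\<in>{0..<n}. M $$ (i,j) * w j) = \<nu> * w i"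
  and k: "k < n" and far: "\<forall>l<n. l \<noteq> k \<longrightarrow> D \<le> \<bar>\<nu> - M $$ (l,l)\<bar>"
  shows "\<forall>l<n. l \<noteq> k \<longrightarrow> \<bar>w l\<bar> \<le> (R/D) * \<bar>w k\<bar>"
proof -
  have D0: "0 < D" using R0 DR by linarith
  obtain m where m: "m \<in> {0..<n}" and mmax: "\<forall>j\<in>{0..<n}. \<bar>w j\<bar> \<le> \<bar>w m\<bar>"
    using obtain_max[of n "\<lambda>j. \<bar>w j\<bar>"] k by auto
  have bnd: "\<bar>w l\<bar> \<le> (R/D) * \<bar>w m\<bar>" if l: "l < n" "l \<noteq> k" for l
  proof -
    have "(\<Sum>j\<in>{0..<n}. M $$ (l,j) * w j) = M $$ (l,l) * w l + (\<Sum>j\<in>{0..<n}-{l}. M $$ (l,j) * w j)"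
      using l by (simp add: sum.remove)
    hence eq: "(\<nu> - M $$ (l,l)) * w l = (\<Sum>j\<in>{0..<n}-{l}. M $$ (l,j) * w j)"
      using eig l by (simp add: algebra_simps)
    have "D * \<bar>w l\<bar> \<le> \<bar>\<nu> - M $$ (l,l)\<bar> * \<bar>w l\<bar>" using far l by (intro mult_right_mono) auto
    also have "\<dots> = \<bar>\<Sum>j\<in>{0..<n}-{l}. M $$ (l,j) * w j\<bar>" using eq by (simp add: abs_mult[symmetric])
    also have "\<dots> \<le> (\<Sum>j\<in>{0..<n}-{l}. \<bar>M $$ (l,j)\<bar> * \<bar>w m\<bar>)"
      by (rule order_trans[OF sum_abs], rule sum_mono) (use mmax in \<open>auto simp: abs_mult intro: mult_left_mono\<close>)
    also have "\<dots> = (\<Sum>j\<in>{0..<n}-{l}. \<bar>M $$ (l,j)\<bar>) * \<bar>w m\<bar>" by (simp add: sum_distrib_right)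
    also have "\<dots> \<le> R * \<bar>w m\<bar>" using Rb l by (intro mult_right_mono) auto
    finally have "D * \<bar>w l\<bar> \<le> R * \<bar>w m\<bar>" .
    thus ?thesis using D0 by (simp add: field_simps)
  qed
  show ?thesis
  proof (cases "m = k")
    case True thus ?thesis using bnd by auto
  next
    case False
    hence "\<bar>w m\<bar> \<le> (R/D) * \<bar>w m\<bar>" using bnd m by auto
    moreover have "R/D < 1" using DR D0 by simp
    ultimately have "\<bar>w m\<bar> = 0"
    proof (cases "\<bar>w m\<bar> = 0")
      case False
      hence "\<bar>w m\<bar> > 0" by auto
      hence "(R/D) * \<bar>w m\<bar> < 1 * \<bar>w m\<bar>" using \<open>R/D < 1\<close> by (intro mult_strict_right_mono)
      thus ?thesis using \<open>\<bar>w m\<bar> \<le> (R/D) * \<bar>w m\<bar>\<close> by linarith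
    qed
    hence "\<forall>j\<in>{0..<n}. w j = 0" using mmax by fastforce
    thus ?thesis using k by auto
  qed
qed

lemma ev_vec:
  fixes M :: "real mat" and g :: "nat \<Rightarrow> real" and R D :: real
  assumes M: "M \<in> carrier_mat n n"
  and Rb: "\<forall>l<n. (\<Sum>j\<in>{0..<n}-{l}. \<bar>M $$ (l,j)\<bar>) \<le> R" and DR: "R < D"
  and gl: "\<forall>k\<le>n. \<forall>l<n. (l < k \<longrightarrow> M $$ (l,l) + D \<le> g k) \<and> (k \<le> l \<longrightarrow> g k + D \<le> M $$ (l,l))"
  and k: "k < n"
  shows "\<exists>w. w k = 1 \<and> (\<forall>i<n. (\<Sum>j\<in>{0..<n}. M $$ (i,j) * w j) = eigenvalues_sorted M ! k * w i)
     \<and> (\<forall>l<n. l \<noteq> k \<longrightarrow> \<bar>w l\<bar> \<le> R/D)"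
proof -
  define \<nu> where "\<nu> = eigenvalues_sorted M ! k"
  have L: "g k < \<nu>" "\<nu> < g (Suc k)" "poly (char_poly M) \<nu> = 0"
    using ev_loc[OF M Rb DR gl] k unfolding \<nu>_def by auto
  have R0: "0 \<le> R"
  proof -
    have "0 \<le> (\<Sum>j\<in>{0..<n}-{0}. \<bar>M $$ (0,j)\<bar>)" by (rule sum_nonneg) auto
    moreover have "(\<Sum>j\<in>{0..<n}-{0}. \<bar>M $$ (0,j)\<bar>) \<le> R" using Rb k by auto
    ultimately show ?thesis by linarith
  qed
  have "eigenvalue M \<nu>" using eigenvalue_root_char_poly[OF M] L by auto
  from find_eigenvector[OF M this] obtain v where
    v: "v \<in> carrier_vec n" "v \<noteq> 0\<^sub>v n" "M *\<^sub>v v = \<nu> \<cdot>\<^sub>v v"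
    unfolding eigenvector_def using M by auto
  have eig: "\<forall>i<n. (\<Sum>j\<in>{0..<n}. M $$ (i,j) * v $ j) = \<nu> * v $ i"
  proof (intro allI impI)
    fix i assume i: "i < n"
    have "(M *\<^sub>v v) $ i = \<nu> * v $ i" using v i by simp
    thus "(\<Sum>j\<in>{0..<n}. M $$ (i,j) * v $ j) = \<nu> * v $ i" using mv_index[OF M v(1) i] by simp
  qed
  have far: "\<forall>l<n. l \<noteq> k \<longrightarrow> D \<le> \<bar>\<nu> - M $$ (l,l)\<bar>"
  proof (intro allI impI)
    fix l assume l: "l < n" "l \<noteq> k"
    show "D \<le> \<bar>\<nu> - M $$ (l,l)\<bar>"
    proof (cases "l < k")
      case True
      hence "M $$ (l,l) + D \<le> g k" using gl k l by auto
      thus ?thesis using L by simp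
    next
      case False
      hence "Suc k \<le> l" using l by auto
      hence "g (Suc k) + D \<le> M $$ (l,l)" using gl l by auto
      thus ?thesis using L by simp
    qed
  qed
  have bnd: "\<forall>l<n. l \<noteq> k \<longrightarrow> \<bar>v $ l\<bar> \<le> (R/D) * \<bar>v $ k\<bar>"
    by (rule loc[OF Rb R0 DR eig k far])
  have vk: "v $ k \<noteq> 0"
  proof
    assume "v $ k = 0"
    hence "\<forall>l<n. v $ l = 0" using bnd by fastforce
    hence "v = 0\<^sub>v n" using v(1) by (intro eq_vecI) auto
    thus False using v by auto
  qed
  define w where "w j = v $ j / v $ k" for j
  show ?thesis unfolding \<nu>_def[symmetric]
  proof (intro exI conjI allI impI)
    show "w k = 1" using vk by (simp add: w_def)
    fix i assume i: "i < n"
    have "(\<Sum>j\<in>{0..<n}. M $$ (i,j) * w j) = (\<Sum>j\<in>{0..<n}. M $$ (i,j) * v $ j) / v $ k"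
      unfolding w_def by (simp add: sum_divide_distrib)
    also have "\<dots> = \<nu> * w i" using eig i by (simp add: w_def)
    finally show "(\<Sum>j\<in>{0..<n}. M $$ (i,j) * w j) = \<nu> * w i" .
  next
    fix l assume l: "l < n" "l \<noteq> k"
    have "\<bar>w l\<bar> = \<bar>v $ l\<bar> / \<bar>v $ k\<bar>" by (simp add: w_def)
    also have "\<dots> \<le> R/D" using bnd l vk by (simp add: divide_le_eq)
    finally show "\<bar>w l\<bar> \<le> R/D" .
  qed
qed


lemma sum_abs_bound:
  fixes f :: "nat \<Rightarrow> real"
  assumes "finite A" "card A \<le> n" "\<forall>x\<in>A. \<bar>f x\<bar> \<le> c" "0 \<le> c"
  shows "\<bar>\<Sum>x\<in>A. f x\<bar> \<le> real n * c"
proof -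
  have "\<bar>\<Sum>x\<in>A. f x\<bar> \<le> (\<Sum>x\<in>A. \<bar>f x\<bar>)" by (rule sum_abs)
  also have "\<dots> \<le> (\<Sum>x\<in>A. c)" using assms by (intro sum_mono) auto
  also have "\<dots> = real (card A) * c" by simp
  also have "\<dots> \<le> real n * c" using assms by (intro mult_right_mono) auto
  finally show ?thesis .
qed

lemma key_ineq:
  fixes S :: "nat \<Rightarrow> nat \<Rightarrow> real" and u v :: "nat \<Rightarrow> real"
  assumes k: "k < n" and uk: "u k = 1" and vk: "v k = 1"
  and ub: "\<forall>l<n. l \<noteq> k \<longrightarrow> \<bar>u l\<bar> \<le> \<epsilon>" and vb: "\<forall>l<n. l \<noteq> k \<longrightarrow> \<bar>v l\<bar> \<le> \<epsilon>"
  and e0: "0 \<le> \<epsilon>" and s1: "0 \<le> s1"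
  and Sd: "s0 \<le> S k k" and Sdd: "\<forall>i<n. \<bar>S i i\<bar> \<le> s1"
  and So: "\<forall>i<n. \<forall>j<n. i \<noteq> j \<longrightarrow> \<bar>S i j\<bar> \<le> s1 / real n"
  shows "(\<Sum>i\<in>{0..<n}. u i * (\<Sum>j\<in>{0..<n}. S i j * v j)) \<ge> s0 - 2*s1*\<epsilon> - 2*real n*s1*\<epsilon>^2"
    and "(\<Sum>i\<in>{0..<n}. u i * v i) \<ge> 1 - real n * \<epsilon>^2"
proof -
  have n0: "real n > 0" using k by auto
  have cardi: "card ({0..<n}-{i}) \<le> n" for i using card_Diff1_le[of "{0..<n}" i] by simp
  note cardk = cardi[of k]
  have sn0: "0 \<le> s1 / real n" using s1 n0 by simp
  have rowoff: "(\<Sum>j\<in>{0..<n}-{i}. \<bar>S i j\<bar>) \<le> s1" if i: "i < n" for i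
  proof -
    have "(\<Sum>j\<in>{0..<n}-{i}. \<bar>S i j\<bar>) = \<bar>\<Sum>j\<in>{0..<n}-{i}. \<bar>S i j\<bar>\<bar>" by (simp add: sum_nonneg)
    also have "\<dots> \<le> real n * (s1 / real n)"
      by (rule sum_abs_bound[OF _ cardi]) (use So i sn0 in auto)
    also have "\<dots> = s1" using n0 by simp
    finally show ?thesis .
  qed
  have row: "(\<Sum>j\<in>{0..<n}. \<bar>S i j\<bar>) \<le> 2 * s1" if i: "i < n" for i
  proof -
    have "(\<Sum>j\<in>{0..<n}. \<bar>S i j\<bar>) = \<bar>S i i\<bar> + (\<Sum>j\<in>{0..<n}-{i}. \<bar>S i j\<bar>)"
      using i by (simp add: sum.remove)
    thus ?thesis using rowoff[OF i] Sdd i by auto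
  qed
  define T where "T i = (\<Sum>j\<in>{0..<n}. S i j * v j)" for i
  have Tsplit: "T i = S i k + (\<Sum>j\<in>{0..<n}-{k}. S i j * v j)" for i
    unfolding T_def using k vk by (simp add: sum.remove)
  have E1: "\<bar>\<Sum>j\<in>{0..<n}-{k}. S k j * v j\<bar> \<le> s1 * \<epsilon>"
  proof -
    have "\<bar>\<Sum>j\<in>{0..<n}-{k}. S k j * v j\<bar> \<le> real n * (s1 / real n * \<epsilon>)"
    proof (rule sum_abs_bound[OF _ cardk])
      show "\<forall>x\<in>{0..<n}-{k}. \<bar>S k x * v x\<bar> \<le> s1 / real n * \<epsilon>"
      proof
        fix x assume x: "x \<in> {0..<n}-{k}"
        have "\<bar>S k x\<bar> * \<bar>v x\<bar> \<le> s1 / real n * \<epsilon>"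
          using So vb k x sn0 by (intro mult_mono) auto
        thus "\<bar>S k x * v x\<bar> \<le> s1 / real n * \<epsilon>" by (simp add: abs_mult)
      qed
    qed (use s1 e0 in auto)
    thus ?thesis using n0 by simp
  qed
  have E2: "\<bar>\<Sum>j\<in>{0..<n}-{k}. S i j * v j\<bar> \<le> 2 * s1 * \<epsilon>" if i: "i < n" for i
  proof -
    have "\<bar>\<Sum>j\<in>{0..<n}-{k}. S i j * v j\<bar> \<le> (\<Sum>j\<in>{0..<n}-{k}. \<bar>S i j\<bar> * \<epsilon>)"
      by (rule order_trans[OF sum_abs], rule sum_mono) (use vb in \<open>auto simp: abs_mult intro: mult_left_mono\<close>)
    also have "\<dots> = (\<Sum>j\<in>{0..<n}-{k}. \<bar>S i j\<bar>) * \<epsilon>" by (simp add: sum_distrib_right)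
    also have "\<dots> \<le> (\<Sum>j\<in>{0..<n}. \<bar>S i j\<bar>) * \<epsilon>"
      by (intro mult_right_mono sum_mono2) (use e0 in auto)
    also have "\<dots> \<le> 2 * s1 * \<epsilon>" using row[OF i] e0 by (intro mult_right_mono) auto
    finally show ?thesis .
  qed
  have Tb: "\<bar>T i\<bar> \<le> s1 / real n + 2 * s1 * \<epsilon>" if i: "i < n" "i \<noteq> k" for i
  proof -
    have "\<bar>S i k\<bar> \<le> s1 / real n" using So i k by auto
    thus ?thesis using Tsplit[of i] E2[OF i(1)] by linarith
  qed
  have E3: "\<bar>\<Sum>i\<in>{0..<n}-{k}. u i * T i\<bar> \<le> real n * (\<epsilon> * (s1 / real n + 2 * s1 * \<epsilon>))"
  proof (rule sum_abs_bound[OF _ cardk])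
    show "\<forall>x\<in>{0..<n}-{k}. \<bar>u x * T x\<bar> \<le> \<epsilon> * (s1 / real n + 2 * s1 * \<epsilon>)"
      using ub Tb by (auto simp: abs_mult intro!: mult_mono)
  qed (use sn0 e0 s1 in auto)
  have F1: "(\<Sum>i\<in>{0..<n}. u i * T i) = T k + (\<Sum>i\<in>{0..<n}-{k}. u i * T i)"
    using k uk by (simp add: sum.remove)
  have F2: "real n * (\<epsilon> * (s1 / real n + 2 * s1 * \<epsilon>)) = s1 * \<epsilon> + 2 * real n * s1 * \<epsilon>^2"
    using n0 by (simp add: field_simps power2_eq_square)
  show "(\<Sum>i\<in>{0..<n}. u i * (\<Sum>j\<in>{0..<n}. S i j * v j)) \<ge> s0 - 2*s1*\<epsilon> - 2*real n*s1*\<epsilon>^2"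
  proof -
    have aux: "\<And>a X Y Tk Skk Z W e2. a = Tk + X \<Longrightarrow> Z = e2 + W \<Longrightarrow> \<bar>X\<bar> \<le> Z \<Longrightarrow> \<bar>Y\<bar> \<le> e2
       \<Longrightarrow> Tk = Skk + Y \<Longrightarrow> s0 \<le> Skk \<Longrightarrow> s0 - 2*e2 - W \<le> (a::real)" by (simp add: abs_le_iff)
    show ?thesis using aux[OF F1 F2 E3 E1 Tsplit[of k] Sd] unfolding T_def by simp
  qed
  have "(\<Sum>i\<in>{0..<n}. u i * v i) = 1 + (\<Sum>i\<in>{0..<n}-{k}. u i * v i)"
    using k uk vk by (simp add: sum.remove)
  moreover have "\<bar>\<Sum>i\<in>{0..<n}-{k}. u i * v i\<bar> \<le> real n * (\<epsilon> * \<epsilon>)"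
    by (rule sum_abs_bound[OF _ cardk]) (use ub vb e0 in \<open>auto simp: abs_mult intro!: mult_mono\<close>)
  ultimately show "(\<Sum>i\<in>{0..<n}. u i * v i) \<ge> 1 - real n * \<epsilon>^2"
    unfolding abs_le_iff by (simp add: power2_eq_square)
qed

lemma eig_identity:
  fixes A S :: "nat \<Rightarrow> nat \<Rightarrow> real" and u v :: "nat \<Rightarrow> real"
  assumes symB: "\<forall>i<n. \<forall>j<n. A i j + t * S i j = A j i + t * S j i"
  and eA: "\<forall>i<n. (\<Sum>j\<in>{0..<n}. A i j * v j) = lam * v i"
  and eB: "\<forall>i<n. (\<Sum>j\<in>{0..<n}. (A i j + t * S i j) * u j) = \<mu> * u i"
  shows "\<mu> * (\<Sum>i\<in>{0..<n}. u i * v i) = lam * (\<Sum>i\<in>{0..<n}. u i * v i)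
          + t * (\<Sum>i\<in>{0..<n}. u i * (\<Sum>j\<in>{0..<n}. S i j * v j))"
proof -
  define Q where "Q = (\<Sum>i\<in>{0..<n}. u i * (\<Sum>j\<in>{0..<n}. (A i j + t * S i j) * v j))"
  have "Q = (\<Sum>i\<in>{0..<n}. u i * (\<Sum>j\<in>{0..<n}. A i j * v j)) + t * (\<Sum>i\<in>{0..<n}. u i * (\<Sum>j\<in>{0..<n}. S i j * v j))"
    unfolding Q_def by (simp add: algebra_simps sum.distrib sum_distrib_left)
  also have "(\<Sum>i\<in>{0..<n}. u i * (\<Sum>j\<in>{0..<n}. A i j * v j)) = lam * (\<Sum>i\<in>{0..<n}. u i * v i)"
    using eA by (simp add: sum_distrib_left algebra_simps)
  finally have Q1: "Q = lam * (\<Sum>i\<in>{0..<n}. u i * v i) + t * (\<Sum>i\<in>{0..<n}. u i * (\<Sum>j\<in>{0..<n}. S i j * v j))" .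
  have "Q = (\<Sum>i\<in>{0..<n}. \<Sum>j\<in>{0..<n}. u i * (A i j + t * S i j) * v j)"
    unfolding Q_def by (simp add: sum_distrib_left mult.assoc)
  also have "\<dots> = (\<Sum>j\<in>{0..<n}. \<Sum>i\<in>{0..<n}. u i * (A i j + t * S i j) * v j)" by (rule sum.swap)
  also have "\<dots> = (\<Sum>j\<in>{0..<n}. v j * (\<Sum>i\<in>{0..<n}. (A j i + t * S j i) * u i))"
    using symB by (auto simp: sum_distrib_left algebra_simps intro!: sum.cong)
  also have "\<dots> = (\<Sum>j\<in>{0..<n}. v j * (\<mu> * u j))" using eB by auto
  also have "\<dots> = \<mu> * (\<Sum>i\<in>{0..<n}. u i * v i)" by (simp add: sum_distrib_left algebra_simps)
  finally show ?thesis using Q1 by simp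
qed


lemma consts_bound:
  fixes c R s0 s1 T x :: real
  assumes c: "c > 0" and R: "R > 0" and s0: "s0 > 0" and s1: "s1 > 0" and T: "T > 0"
  and x: "x \<ge> 4*T*s1/c + 4*R/c + 24*s1*R/(c*s0) + 96*s1*R^2/(c^2*s0) + 16*R^2/c^2 + 1"
  shows "R < c*x/2 - T*s1"
    and "2*s1*(R/(c*x/2 - T*s1)) + 2*x*s1*(R/(c*x/2 - T*s1))^2 < s0"
    and "x*(R/(c*x/2 - T*s1))^2 < 1"
proof -
  have t1: "0 \<le> 4*T*s1/c" "0 \<le> 4*R/c" "0 \<le> 24*s1*R/(c*s0)" "0 \<le> 96*s1*R^2/(c^2*s0)" "0 \<le> 16*R^2/c^2"
    using c R s0 s1 T by auto
  have x1: "x \<ge> 4*T*s1/c" "x \<ge> 4*R/c + 1" "x \<ge> 24*s1*R/(c*s0)" "x \<ge> 96*s1*R^2/(c^2*s0)"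
     "x > 16*R^2/c^2" using x t1 by linarith+
  have xp: "x > 0" using x t1 by linarith
  have h1: "c*x \<ge> 4*T*s1" using x1(1) c by (simp add: divide_le_eq mult.commute)
  have h2: "c*x > 4*R" using x1(2) c
  proof -
    have "c * x \<ge> c * (4*R/c + 1)" using x1(2) c by (intro mult_left_mono) auto
    also have "c * (4*R/c + 1) = 4*R + c" using c by (simp add: field_simps)
    finally show ?thesis using c by linarith
  qed
  define D where "D = c*x/2 - T*s1"
  have D4: "D \<ge> c*x/4" unfolding D_def using h1 by linarith
  have DR: "R < D" using D4 h2 by linarith
  thus "R < c*x/2 - T*s1" unfolding D_def .
  have Dp: "D > 0" using DR R by linarith
  define e0 where "e0 = 4*R/(c*x)"
  have cxp: "c*x > 0" using c xp by simp
  have ee: "R/D \<le> e0" unfolding e0_def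
  proof -
    have "R/D \<le> R/(c*x/4)" using D4 R cxp by (intro divide_left_mono) auto
    thus "R/D \<le> 4*R/(c*x)" by (simp add: mult.commute)
  qed
  have e0p: "0 \<le> R/D" using R Dp by simp
  have ee2: "(R/D)^2 \<le> e0^2" using ee e0p by (intro power_mono) auto
  have b1: "2*s1*e0 \<le> s0/3"
  proof -
    have "24*s1*R \<le> x * (c*s0)" using x1(3) c s0 by (simp add: divide_le_eq)
    thus ?thesis unfolding e0_def using cxp by (simp add: field_simps)
  qed
  have xe0: "x*e0^2 = 16*R^2/(c^2*x)" unfolding e0_def using xp c by (simp add: field_simps power2_eq_square)
  have b2: "2*s1*(x*e0^2) \<le> s0/3"
  proof -
    have "96*s1*R^2 \<le> x * (c^2*s0)" using x1(4) c s0 by (simp add: divide_le_eq)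
    thus ?thesis unfolding xe0 using cxp xp c by (simp add: field_simps)
  qed
  have b3: "x*e0^2 < 1"
  proof -
    have "16*R^2 < x * c^2" using x1(5) c by (simp add: divide_less_eq)
    thus ?thesis unfolding xe0 using xp c by (simp add: field_simps)
  qed
  have m1: "2*s1*(R/D) \<le> 2*s1*e0" by (rule mult_left_mono[OF ee]) (use s1 in auto)
  have m2: "x*(R/D)^2 \<le> x*e0^2" using ee2 xp by (intro mult_left_mono) auto
  have m3: "2*s1*(x*(R/D)^2) \<le> 2*s1*(x*e0^2)" by (rule mult_left_mono[OF m2]) (use s1 in auto)
  show "2*s1*(R/(c*x/2 - T*s1)) + 2*x*s1*(R/(c*x/2 - T*s1))^2 < s0"
    using m1 m3 b1 b2 s0 unfolding D_def[symmetric] by (simp add: algebra_simps)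
  show "x*(R/(c*x/2 - T*s1))^2 < 1" using m2 b3 unfolding D_def[symmetric] by linarith
qed


theorem theorem2:
  fixes c C s\<^sub>0 s\<^sub>1 T :: real
  assumes "c > 0" "C > 0" "s\<^sub>0 > 0" "s\<^sub>1 > 0" "T > 0"
  shows "\<exists>N::nat. \<forall>n \<ge> N. \<forall>(A::real mat) (S::real mat) (t::real).
     sym_mat n A \<and> pos_def_mat n A
     \<and> (\<forall>k. Suc k < n \<longrightarrow> A $$ (k, k) < A $$ (Suc k, Suc k))
     \<and> (\<forall>k<n. \<forall>l<n. k \<noteq> l \<longrightarrow> \<bar>A $$ (k, k) - A $$ (l, l)\<bar> \<ge> c * real n)
     \<and> (\<forall>k<n. (\<Sum>l\<in>{0..<n} - {k}. \<bar>A $$ (k, l)\<bar>) \<le> C)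
     \<and> sym_mat n S
     \<and> (\<forall>k<n. s\<^sub>0 \<le> S $$ (k, k) \<and> S $$ (k, k) \<le> s\<^sub>1)
     \<and> (\<forall>k<n. \<forall>l<n. k \<noteq> l \<longrightarrow> \<bar>S $$ (k, l)\<bar> \<le> s\<^sub>1 / real n)
     \<and> 0 < t \<and> t \<le> T
     \<longrightarrow> (let lam = eigenvalues_sorted A; mu = eigenvalues_sorted (A + t \<cdot>\<^sub>m S) in
          length lam = n \<and> length mu = n
          \<and> (\<forall>k<n. lam ! k \<le> mu ! k)
          \<and> (\<forall>k. Suc k < n \<longrightarrow> mu ! k \<le> lam ! Suc k))"
proof -
  note cp = assms
  define R where "R = C + T * s\<^sub>1"
  have Rp: "R > 0" unfolding R_def using cp by (simp add: add_pos_pos)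
  define X where "X = 4*T*s\<^sub>1/c + 4*R/c + 24*s\<^sub>1*R/(c*s\<^sub>0) + 96*s\<^sub>1*R^2/(c^2*s\<^sub>0) + 16*R^2/c^2 + 1"
  have X1: "X \<ge> 1" unfolding X_def using cp Rp by (simp add: add_nonneg_nonneg)
  show ?thesis
  proof (intro exI[of _ "nat \<lceil>X\<rceil>"] allI impI)
    fix n :: nat and A S :: "real mat" and t :: real
    assume nN: "nat \<lceil>X\<rceil> \<le> n"
    assume H: "sym_mat n A \<and> pos_def_mat n A
     \<and> (\<forall>k. Suc k < n \<longrightarrow> A $$ (k, k) < A $$ (Suc k, Suc k))
     \<and> (\<forall>k<n. \<forall>l<n. k \<noteq> l \<longrightarrow> \<bar>A $$ (k, k) - A $$ (l, l)\<bar> \<ge> c * real n)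
     \<and> (\<forall>k<n. (\<Sum>l\<in>{0..<n} - {k}. \<bar>A $$ (k, l)\<bar>) \<le> C)
     \<and> sym_mat n S
     \<and> (\<forall>k<n. s\<^sub>0 \<le> S $$ (k, k) \<and> S $$ (k, k) \<le> s\<^sub>1)
     \<and> (\<forall>k<n. \<forall>l<n. k \<noteq> l \<longrightarrow> \<bar>S $$ (k, l)\<bar> \<le> s\<^sub>1 / real n)
     \<and> 0 < t \<and> t \<le> T"
    then have symA: "sym_mat n A" and Amono: "\<forall>k. Suc k < n \<longrightarrow> A $$ (k, k) < A $$ (Suc k, Suc k)"
      and Agap: "\<forall>k<n. \<forall>l<n. k \<noteq> l \<longrightarrow> \<bar>A $$ (k, k) - A $$ (l, l)\<bar> \<ge> c * real n"
      and Arow: "\<forall>k<n. (\<Sum>l\<in>{0..<n} - {k}. \<bar>A $$ (k, l)\<bar>) \<le> C"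
      and symS: "sym_mat n S" and Sd: "\<forall>k<n. s\<^sub>0 \<le> S $$ (k, k) \<and> S $$ (k, k) \<le> s\<^sub>1"
      and So: "\<forall>k<n. \<forall>l<n. k \<noteq> l \<longrightarrow> \<bar>S $$ (k, l)\<bar> \<le> s\<^sub>1 / real n"
      and t0: "0 < t" and tT: "t \<le> T" by blast+
    have xX: "real n \<ge> X" using nN real_nat_ceiling_ge[of X] by linarith
    have n0: "n > 0" using xX X1 by auto
    have A: "A \<in> carrier_mat n n" and S: "S \<in> carrier_mat n n"
      using symA symS unfolding sym_mat_def by auto
    have Asy: "A $$ (i,j) = A $$ (j,i)" if "i < n" "j < n" for i j
    proof -
      have "transpose_mat A $$ (i,j) = A $$ (j,i)" using A that by auto
      thus ?thesis using symA unfolding sym_mat_def by auto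
    qed
    have Ssy: "S $$ (i,j) = S $$ (j,i)" if "i < n" "j < n" for i j
    proof -
      have "transpose_mat S $$ (i,j) = S $$ (j,i)" using S that by auto
      thus ?thesis using symS unfolding sym_mat_def by auto
    qed
    define B where "B = A + t \<cdot>\<^sub>m S"
    have Bc: "B \<in> carrier_mat n n" unfolding B_def using A S by auto
    have Be: "B $$ (i,j) = A $$ (i,j) + t * S $$ (i,j)" if "i < n" "j < n" for i j
      unfolding B_def using A S that by auto
    define a where "a l = A $$ (l,l)" for l
    have amono: "a l < a k" if "l < k" "k < n" for l k
      using that
    proof (induction k)
      case 0 then show ?case by simp
    next
      case (Suc k)
      have "a k < a (Suc k)" using Amono Suc.prems unfolding a_def by auto
      thus ?case using Suc by (cases "l = k") auto
    qed
    have agap: "a l + c * real n \<le> a k" if "l < k" "k < n" for l k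
    proof -
      have "\<bar>a k - a l\<bar> \<ge> c * real n" using Agap that unfolding a_def by auto
      thus ?thesis using amono[OF that] by linarith
    qed
    have cn: "0 < c * real n" using cp n0 by simp
    define D where "D = c * real n / 2 - T * s\<^sub>1"
    define \<epsilon> where "\<epsilon> = R / D"
    have CB: "R < D" "2*s\<^sub>1*\<epsilon> + 2*real n*s\<^sub>1*\<epsilon>^2 < s\<^sub>0" "real n*\<epsilon>^2 < 1"
      using consts_bound[OF cp(1) Rp cp(3) cp(4) cp(5), of "real n"] xX
      unfolding X_def D_def \<epsilon>_def by auto
    have Dle: "D \<le> c * real n / 2" unfolding D_def using cp by simp
    define g where "g k = (if k < n then a k - c * real n / 2 else a (n-1) + c * real n / 2)" for k
    have tS: "0 \<le> t * S $$ (l,l)" "t * S $$ (l,l) \<le> T * s\<^sub>1" if "l < n" for l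
    proof -
      have "s\<^sub>0 \<le> S $$ (l,l)" "S $$ (l,l) \<le> s\<^sub>1" using Sd that by auto
      thus "0 \<le> t * S $$ (l,l)" using t0 cp by simp
      show "t * S $$ (l,l) \<le> T * s\<^sub>1" using \<open>S $$ (l,l) \<le> s\<^sub>1\<close> \<open>s\<^sub>0 \<le> S $$ (l,l)\<close> t0 tT cp
        by (intro mult_mono) auto
    qed
    have gpos: "(l < k \<longrightarrow> a l + c * real n / 2 \<le> g k) \<and> (k \<le> l \<longrightarrow> g k + c * real n / 2 \<le> a l)"
      if "k \<le> n" "l < n" for k l
    proof (intro conjI impI)
      assume lk: "l < k"
      show "a l + c * real n / 2 \<le> g k"
      proof (cases "k < n")
        case True thus ?thesis using agap[OF lk True] cn unfolding g_def by simp
      next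
        case False
        hence "l \<le> n - 1" using lk that by auto
        hence "a l \<le> a (n-1)" using amono[of l "n-1"] that by (cases "l = n-1") auto
        thus ?thesis using False unfolding g_def by simp
      qed
    next
      assume kl: "k \<le> l"
      hence "a k \<le> a l" using amono[of k l] that by (cases "k = l") auto
      thus "g k + c * real n / 2 \<le> a l" using kl that unfolding g_def by simp
    qed
    have glA: "\<forall>k\<le>n. \<forall>l<n. (l < k \<longrightarrow> A $$ (l,l) + D \<le> g k) \<and> (k \<le> l \<longrightarrow> g k + D \<le> A $$ (l,l))"
      using gpos Dle unfolding a_def by fastforce
    have glB: "\<forall>k\<le>n. \<forall>l<n. (l < k \<longrightarrow> B $$ (l,l) + D \<le> g k) \<and> (k \<le> l \<longrightarrow> g k + D \<le> B $$ (l,l))"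
    proof (intro allI impI conjI)
      fix k l assume k: "k \<le> n" and l: "l < n"
      have Bl: "B $$ (l,l) = a l + t * S $$ (l,l)" using Be l unfolding a_def by auto
      {
        assume "l < k"
        thus "B $$ (l,l) + D \<le> g k" using gpos[OF k l] tS[OF l] Bl unfolding D_def by linarith
      next
        assume "k \<le> l"
        thus "g k + D \<le> B $$ (l,l)" using gpos[OF k l] tS[OF l] Bl Dle by linarith
      }
    qed
    have RbA: "\<forall>l<n. (\<Sum>j\<in>{0..<n}-{l}. \<bar>A $$ (l,j)\<bar>) \<le> R"
      using Arow cp unfolding R_def by (smt (verit) mult_pos_pos)
    have Soff: "(\<Sum>j\<in>{0..<n}-{l}. \<bar>S $$ (l,j)\<bar>) \<le> s\<^sub>1" if l: "l < n" for l
    proof -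
      have "(\<Sum>j\<in>{0..<n}-{l}. \<bar>S $$ (l,j)\<bar>) = \<bar>\<Sum>j\<in>{0..<n}-{l}. \<bar>S $$ (l,j)\<bar>\<bar>" by (simp add: sum_nonneg)
      also have "\<dots> \<le> real n * (s\<^sub>1 / real n)"
        by (rule sum_abs_bound) (use So l cp card_Diff1_le[of "{0..<n}" l] in auto)
      also have "\<dots> = s\<^sub>1" using n0 by simp
      finally show ?thesis .
    qed
    have RbB: "\<forall>l<n. (\<Sum>j\<in>{0..<n}-{l}. \<bar>B $$ (l,j)\<bar>) \<le> R"
    proof (intro allI impI)
      fix l assume l: "l < n"
      have "(\<Sum>j\<in>{0..<n}-{l}. \<bar>B $$ (l,j)\<bar>) \<le> (\<Sum>j\<in>{0..<n}-{l}. \<bar>A $$ (l,j)\<bar> + t * \<bar>S $$ (l,j)\<bar>)"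
        using l t0 by (intro sum_mono) (auto simp: Be abs_mult intro: order_trans[OF abs_triangle_ineq])
      also have "\<dots> = (\<Sum>j\<in>{0..<n}-{l}. \<bar>A $$ (l,j)\<bar>) + t * (\<Sum>j\<in>{0..<n}-{l}. \<bar>S $$ (l,j)\<bar>)"
        by (simp add: sum.distrib sum_distrib_left)
      also have "\<dots> \<le> C + T * s\<^sub>1"
      proof -
        have "t * (\<Sum>j\<in>{0..<n}-{l}. \<bar>S $$ (l,j)\<bar>) \<le> T * s\<^sub>1"
          using Soff[OF l] t0 tT by (intro mult_mono) (auto intro: sum_nonneg)
        thus ?thesis using Arow l by fastforce
      qed
      finally show "(\<Sum>j\<in>{0..<n}-{l}. \<bar>B $$ (l,j)\<bar>) \<le> R" unfolding R_def .
    qed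
    note EA = ev_loc[OF A RbA CB(1) glA]
    note EB = ev_loc[OF Bc RbB CB(1) glB]
    define lam where "lam = eigenvalues_sorted A"
    define mu where "mu = eigenvalues_sorted B"
    have key: "lam ! k \<le> mu ! k" if k: "k < n" for k
    proof -
      obtain v where v1: "v k = 1" and ve: "\<forall>i<n. (\<Sum>j\<in>{0..<n}. A $$ (i,j) * v j) = lam ! k * v i"
        and vb: "\<forall>l<n. l \<noteq> k \<longrightarrow> \<bar>v l\<bar> \<le> \<epsilon>"
        using ev_vec[OF A RbA CB(1) glA k] unfolding lam_def \<epsilon>_def by blast
      obtain u where u1: "u k = 1" and ue: "\<forall>i<n. (\<Sum>j\<in>{0..<n}. B $$ (i,j) * u j) = mu ! k * u i"
        and ub: "\<forall>l<n. l \<noteq> k \<longrightarrow> \<bar>u l\<bar> \<le> \<epsilon>"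
        using ev_vec[OF Bc RbB CB(1) glB k] unfolding mu_def \<epsilon>_def by blast
      have ue': "\<forall>i<n. (\<Sum>j\<in>{0..<n}. (A $$ (i,j) + t * S $$ (i,j)) * u j) = mu ! k * u i"
      proof (intro allI impI)
        fix i assume i: "i < n"
        have "(\<Sum>j\<in>{0..<n}. (A $$ (i,j) + t * S $$ (i,j)) * u j) = (\<Sum>j\<in>{0..<n}. B $$ (i,j) * u j)"
          using i by (intro sum.cong) (auto simp: Be)
        thus "(\<Sum>j\<in>{0..<n}. (A $$ (i,j) + t * S $$ (i,j)) * u j) = mu ! k * u i" using ue i by simp
      qed
      have symB: "\<forall>i<n. \<forall>j<n. A $$ (i,j) + t * S $$ (i,j) = A $$ (j,i) + t * S $$ (j,i)"
        using Asy Ssy by auto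
      have e0: "0 \<le> \<epsilon>" using CB(1) Rp unfolding \<epsilon>_def by simp
      have ID: "mu ! k * (\<Sum>i\<in>{0..<n}. u i * v i) = lam ! k * (\<Sum>i\<in>{0..<n}. u i * v i)
          + t * (\<Sum>i\<in>{0..<n}. u i * (\<Sum>j\<in>{0..<n}. S $$ (i,j) * v j))"
        by (rule eig_identity[where A="\<lambda>i j. A $$ (i,j)" and S="\<lambda>i j. S $$ (i,j)", OF symB ve ue'])
      have KI: "(\<Sum>i\<in>{0..<n}. u i * (\<Sum>j\<in>{0..<n}. S $$ (i,j) * v j)) \<ge> s\<^sub>0 - 2*s\<^sub>1*\<epsilon> - 2*real n*s\<^sub>1*\<epsilon>^2"
           "(\<Sum>i\<in>{0..<n}. u i * v i) \<ge> 1 - real n * \<epsilon>^2"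
      proof -
        have Sdk: "s\<^sub>0 \<le> S $$ (k,k)" using Sd k by auto
        have Sdd: "\<forall>i<n. \<bar>S $$ (i,i)\<bar> \<le> s\<^sub>1" using Sd cp(3) by (auto simp: abs_le_iff)
        have s1p: "0 \<le> s\<^sub>1" using cp(4) by simp
        note KK = key_ineq[where S="\<lambda>i j. S $$ (i,j)", OF k u1 v1 ub vb e0 s1p Sdk Sdd So]
        show "(\<Sum>i\<in>{0..<n}. u i * (\<Sum>j\<in>{0..<n}. S $$ (i,j) * v j)) \<ge> s\<^sub>0 - 2*s\<^sub>1*\<epsilon> - 2*real n*s\<^sub>1*\<epsilon>^2"
          using KK(1) .
        show "(\<Sum>i\<in>{0..<n}. u i * v i) \<ge> 1 - real n * \<epsilon>^2" using KK(2) .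
      qed
      define W where "W = (\<Sum>i\<in>{0..<n}. u i * v i)"
      define U where "U = (\<Sum>i\<in>{0..<n}. u i * (\<Sum>j\<in>{0..<n}. S $$ (i,j) * v j))"
      have W0: "W > 0" using KI(2) CB(3) unfolding W_def by linarith
      have U0: "U > 0" using KI(1) CB(2) unfolding U_def by linarith
      have "(mu ! k - lam ! k) * W = t * U" using ID unfolding W_def U_def by (simp add: algebra_simps)
      moreover have "t * U > 0" using t0 U0 by simp
      ultimately have "(mu ! k - lam ! k) * W > 0" by simp
      hence "mu ! k - lam ! k > 0" using W0 by (simp add: zero_less_mult_iff)
      thus ?thesis by simp
    qed
    show "let lam = eigenvalues_sorted A; mu = eigenvalues_sorted (A + t \<cdot>\<^sub>m S) in
          length lam = n \<and> length mu = n
          \<and> (\<forall>k<n. lam ! k \<le> mu ! k)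
          \<and> (\<forall>k. Suc k < n \<longrightarrow> mu ! k \<le> lam ! Suc k)"
      unfolding Let_def B_def[symmetric] lam_def[symmetric] mu_def[symmetric]
    proof (intro conjI allI impI)
      show "length lam = n" using EA unfolding lam_def by auto
      show "length mu = n" using EB unfolding mu_def by auto
      fix k
      show "k < n \<Longrightarrow> lam ! k \<le> mu ! k" by (rule key)
      assume "Suc k < n"
      hence "mu ! k < g (Suc k)" "g (Suc k) < lam ! Suc k" using EA EB unfolding lam_def mu_def by auto
      thus "mu ! k \<le> lam ! Suc k" by simp
    qed
  qed
qed

end
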